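(* Let $P$ be a finite graded poset with $\hat0,\hat1$. (1) If $x,y\in P-\{\hat0,\hat1\}$ with $x$ covering $y$, and $x',y'$ denote the new elements of $\mathcal U(P;x,y)$, then $\mathcal Z(\mathcal U(P;x,y);x',y',y)=P$. (2) If $x,y,z\in P-\{\hat0,\hat1\}$ satisfy the zipping hypotheses, then $\mathcal O(\mathcal Z(P;x,y,z))$ is obtained from $\mathcal O(P)$ by first contracting $y$ to $x$ and then contracting $x$ to $z$. (3) If $x$ covers $y$, then $\mathcal O(\mathcal U(P;x,y))$ is obtained from $\mathcal O(P)$ by first performing the edge subdivision of $\{x,y\}$ with new vertex $x'$, and then the edge subdivision of $\{x,x'\}$ with new vertex $y'$.
   Context: $\mathcal O(P)$ denotes the simplicial complex of chains of $P-\{\hat0,\hat1\}$; $r$ is the rank function. Zipping: let $x,y,z\in P-\{\hat0,\hat1\}$ be such that (i) $x$ covers exactly $y$ and $z$, (ii) $x$ is the unique minimal upper bound of $y$ and $z$, (iii) $y$ and $z$ cover exactly the same elements; $\mathcal Z(P;x,y,z)$ is the poset obtained from $P$ by deleting $x,y$ and adding the relations $w>z$ for all relations $w>y$. Unzipping: for $x,y\in P-\{\hat0,\hat1\}$ with $x$ covering $y$, $\mathcal U(P;x,y)$ is the graded poset obtained by deleting the cover relation $y<x$, adding new elements $x',y'$ with $r(x')=r(x)$, $r(y')=r(y)$, and adding the cover relations $x'<w$ for every cover $x<w$, $w<y'$ for every cover $w<y$, and $y'<x'$, $y<x'$, $y'<x$. For a simplicial complex $\Delta$ with edge $\{i,j\}$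 and $\mathrm{lk}_\Delta(F)=\{G: G\cap F=\emptyset, G\cup F\in\Delta\}$: the edge subdivision of $\{i,j\}$ by a new vertex $v$ is $\{F\in\Delta:F\not\supseteq\{i,j\}\}\cup\{F\cup\{v\},F\cup\{i,v\},F\cup\{j,v\}:F\in\mathrm{lk}_\Delta(\{i,j\})\}$; the edge contraction of $i$ to $j$ is $\{F\in\Delta:i\notin F\}\cup\{(F\setminus\{i\})\cup\{j\}: i\in F\in\Delta\}$. *)

theory Defs
  imports Main
begin

text \<open>A poset is a pair (carrier, order relation), the relation being the
  reflexive order \<le> as a set of pairs (a,b) meaning a \<le> b.\<close>
type_synonym 'a poset = "'a set \<times> ('a \<times> 'a) set"

definition is_poset :: "'a poset \<Rightarrow> bool" where
  "is_poset P \<longleftrightarrow> snd P \<subseteq> fst P \<times> fst P \<and> refl_on (fst P) (snd P)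
     \<and> antisym (snd P) \<and> trans (snd P)"

definition covers :: "'a poset \<Rightarrow> 'a \<Rightarrow> 'a \<Rightarrow> bool" where
  "covers P a c \<longleftrightarrow> (c, a) \<in> snd P \<and> a \<noteq> c \<and>
     (\<forall>w. (c, w) \<in> snd P \<and> (w, a) \<in> snd P \<longrightarrow> w = c \<or> w = a)"

text \<open>Finite graded poset with least element bt (\<open>\<hat>0\<close>) and greatest element tp (\<open>\<hat>1\<close>).\<close>
definition graded_bounded_poset :: "'a poset \<Rightarrow> 'a \<Rightarrow> 'a \<Rightarrow> bool" where
  "graded_bounded_poset P bt tp \<longleftrightarrow> finite (fst P) \<and> is_poset P \<and>
     bt \<in> fst P \<and> tp \<in> fst P \<and> (\<forall>a\<in>fst P. (bt, a) \<in> snd P \<and> (a, tp) \<in> snd P) \<and>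
     (\<exists>r :: 'a \<Rightarrow> nat. r bt = 0 \<and>
        (\<forall>a\<in>fst P. \<forall>c\<in>fst P. covers P a c \<longrightarrow> r a = r c + 1))"

text \<open>Order complex: chains of P - {bt, tp} (including the empty face).\<close>
definition order_complex :: "'a poset \<Rightarrow> 'a \<Rightarrow> 'a \<Rightarrow> 'a set set" where
  "order_complex P bt tp = {F. F \<subseteq> fst P - {bt, tp} \<and>
     (\<forall>u\<in>F. \<forall>v\<in>F. (u, v) \<in> snd P \<or> (v, u) \<in> snd P)}"

definition zip_hyp :: "'a poset \<Rightarrow> 'a \<Rightarrow> 'a \<Rightarrow> 'a \<Rightarrow> bool" where
  "zip_hyp P x y z \<longleftrightarrow>
     y \<noteq> z \<and> {w \<in> fst P. covers P x w} = {y, z} \<and>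
     {w \<in> fst P. (y, w) \<in> snd P \<and> (z, w) \<in> snd P \<and>
        (\<forall>v\<in>fst P. (y, v) \<in> snd P \<and> (z, v) \<in> snd P \<and> (v, w) \<in> snd P \<longrightarrow> v = w)} = {x} \<and>
     {w \<in> fst P. covers P y w} = {w \<in> fst P. covers P z w}"

definition zip_poset :: "'a poset \<Rightarrow> 'a \<Rightarrow> 'a \<Rightarrow> 'a \<Rightarrow> 'a poset" where
  "zip_poset P x y z = (fst P - {x, y},
     {(a, c). a \<in> fst P - {x, y} \<and> c \<in> fst P - {x, y} \<and>
        ((a, c) \<in> snd P \<or> (a = z \<and> (y, c) \<in> snd P \<and> c \<noteq> y))})"

definition cover_pairs :: "'a poset \<Rightarrow> ('a \<times> 'a) set" where
  "cover_pairs P = {(c, a). c \<in> fst P \<and> a \<in> fst P \<and> covers P a c}"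

text \<open>Unzipping U(P;x,y) with new elements x', y' (given by the caller, assumed fresh):
  the poset generated by the modified cover relation.\<close>
definition unzip :: "'a poset \<Rightarrow> 'a \<Rightarrow> 'a \<Rightarrow> 'a \<Rightarrow> 'a \<Rightarrow> 'a poset" where
  "unzip P x y x' y' =
    (let S' = fst P \<union> {x', y'};
         C' = (cover_pairs P - {(y, x)})
              \<union> {(x', w) | w. (x, w) \<in> cover_pairs P}
              \<union> {(w, y') | w. (w, y) \<in> cover_pairs P}
              \<union> {(y', x'), (y, x'), (y', x)}
     in (S', Id_on S' \<union> C'\<^sup>+))"

definition link :: "'a set set \<Rightarrow> 'a set \<Rightarrow> 'a set set" where
  "link D F = {G. G \<inter> F = {} \<and> G \<union> F \<in> D}"

definition edge_subdiv :: "'a set set \<Rightarrow> 'a \<Rightarrow> 'a \<Rightarrow> 'a \<Rightarrow> 'a set set" where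
  "edge_subdiv D i j v = {F \<in> D. \<not> {i, j} \<subseteq> F}
     \<union> {F \<union> {v} | F. F \<in> link D {i, j}}
     \<union> {F \<union> {i, v} | F. F \<in> link D {i, j}}
     \<union> {F \<union> {j, v} | F. F \<in> link D {i, j}}"

definition edge_contract :: "'a set set \<Rightarrow> 'a \<Rightarrow> 'a \<Rightarrow> 'a set set" where
  "edge_contract D i j = {F \<in> D. i \<notin> F} \<union> {(F - {i}) \<union> {j} | F. i \<in> F \<and> F \<in> D}"

end

theory Submission imports Defs begin

lemma po_facts:
  assumes "is_poset P"
  shows po_sub: "(a,b) \<in> snd P \<Longrightarrow> a \<in> fst P \<and> b \<in> fst P"
    and po_refl: "a \<in> fst P \<Longrightarrow> (a,a) \<in> snd P"
    and po_trans: "(a,b) \<in> snd P \<Longrightarrow> (b,c) \<in> snd P \<Longrightarrow> (a,c) \<in> snd P"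
    and po_antisym: "(a,b) \<in> snd P \<Longrightarrow> (b,a) \<in> snd P \<Longrightarrow> a = b"
  using assms unfolding is_poset_def refl_on_def trans_def antisym_def by blast+

lemma cover_trancl_le:
  assumes "is_poset P" "(a,c) \<in> (cover_pairs P)\<^sup>+"
  shows "(a,c) \<in> snd P \<and> a \<noteq> c"
  using assms(2)
proof (induction rule: trancl_induct)
  case (base c) then show ?case by (auto simp: cover_pairs_def covers_def)
next
  case (step b c)
  then have bc: "(b,c) \<in> snd P" "b \<noteq> c" by (auto simp: cover_pairs_def covers_def)
  have "(a,c) \<in> snd P" using po_trans[OF assms(1)] step bc by blast
  moreover have "a \<noteq> c" using po_antisym[OF assms(1)] step bc by blast
  ultimately show ?case by blast
qed

lemma le_cover_trancl:
  assumes fin: "finite (fst P)" and po: "is_poset P"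
  shows "(a,c) \<in> snd P \<Longrightarrow> a \<noteq> c \<Longrightarrow> (a,c) \<in> (cover_pairs P)\<^sup>+"
proof (induction "card {w \<in> fst P. (a,w) \<in> snd P \<and> (w,c) \<in> snd P}" arbitrary: a c rule: less_induct)
  case (less a c)
  have ac: "a \<in> fst P" "c \<in> fst P" using po_sub[OF po less(2)] by auto
  show ?case
  proof (cases "covers P c a")
    case True then show ?thesis using ac by (auto simp: cover_pairs_def)
  next
    case False
    then obtain w where w: "(a,w) \<in> snd P" "(w,c) \<in> snd P" "w \<noteq> a" "w \<noteq> c"
      using less(2,3) unfolding covers_def by blast
    let ?I = "\<lambda>a c. {w \<in> fst P. (a,w) \<in> snd P \<and> (w,c) \<in> snd P}"
    have fI: "finite (?I a c)" using fin by simp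
    have "?I a w \<subseteq> ?I a c" using po_trans[OF po] w by blast
    moreover have "c \<notin> ?I a w" using po_antisym[OF po] w by blast
    moreover have "c \<in> ?I a c" using ac less(2) po_refl[OF po] by blast
    ultimately have c1: "card (?I a w) < card (?I a c)" by (intro psubset_card_mono[OF fI]) blast
    have "?I w c \<subseteq> ?I a c" using po_trans[OF po] w by blast
    moreover have "a \<notin> ?I w c" using po_antisym[OF po] w by blast
    moreover have "a \<in> ?I a c" using ac less(2) po_refl[OF po] by blast
    ultimately have c2: "card (?I w c) < card (?I a c)" by (intro psubset_card_mono[OF fI]) blast
    have "(a,w) \<in> (cover_pairs P)\<^sup>+" using less(1)[OF c1] w by blast
    moreover have "(w,c) \<in> (cover_pairs P)\<^sup>+" using less(1)[OF c2] w by blast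
    ultimately show ?thesis by simp
  qed
qed


definition unzR :: "'a poset \<Rightarrow> 'a \<Rightarrow> 'a \<Rightarrow> 'a \<Rightarrow> 'a \<Rightarrow> ('a \<times> 'a) set" where
  "unzR P x y x' y' = {(a,c). (a,c) \<in> snd P \<and> a \<noteq> c \<and> (a,c) \<noteq> (y,x)}
     \<union> {(x',c) | c. (x,c) \<in> snd P \<and> c \<noteq> x} \<union> {(a,x') | a. (a,y) \<in> snd P}
     \<union> {(y',c) | c. (x,c) \<in> snd P} \<union> {(a,y') | a. (a,y) \<in> snd P \<and> a \<noteq> y} \<union> {(y',x')}"

definition unzC :: "'a poset \<Rightarrow> 'a \<Rightarrow> 'a \<Rightarrow> 'a \<Rightarrow> 'a \<Rightarrow> ('a \<times> 'a) set" where
  "unzC P x y x' y' = (cover_pairs P - {(y, x)})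
              \<union> {(x', w) | w. (x, w) \<in> cover_pairs P}
              \<union> {(w, y') | w. (w, y) \<in> cover_pairs P}
              \<union> {(y', x'), (y, x'), (y', x)}"

lemma unzip_eq: "unzip P x y x' y' = (fst P \<union> {x',y'}, Id_on (fst P \<union> {x',y'}) \<union> (unzC P x y x' y')\<^sup>+)"
  unfolding unzip_def unzC_def Let_def by simp

locale unz =
  fixes P :: "'a poset" and x y x' y' :: 'a
  assumes po: "is_poset P" and fin: "finite (fst P)" and cxy: "covers P x y"
    and nx: "x' \<notin> fst P" and ny: "y' \<notin> fst P" and nxy: "x' \<noteq> y'"
begin

lemma basics: "x \<in> fst P" "y \<in> fst P" "(y,x) \<in> snd P" "x \<noteq> y" "(x,y) \<notin> snd P"
  "\<And>w. (y,w) \<in> snd P \<Longrightarrow> (w,x) \<in> snd P \<Longrightarrow> w = y \<or> w = x"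
  using cxy po_sub[OF po] po_antisym[OF po] unfolding covers_def by blast+

lemma Rmem: "(a,c) \<in> unzR P x y x' y' \<longleftrightarrow> ((a,c)\<in>snd P \<and> a\<noteq>c \<and> (a,c)\<noteq>(y,x)) \<or> (a=x' \<and> (x,c)\<in>snd P \<and> c\<noteq>x)
   \<or> (c=x' \<and> (a,y)\<in>snd P) \<or> (a=y' \<and> (x,c)\<in>snd P) \<or> (c=y' \<and> (a,y)\<in>snd P \<and> a\<noteq>y) \<or> (a=y' \<and> c=x')"
  unfolding unzR_def by blast

lemma R_trans: "trans (unzR P x y x' y')"
proof (rule transI)
  fix a b c assume ab: "(a,b) \<in> unzR P x y x' y'" and bc: "(b,c) \<in> unzR P x y x' y'"
  note T = po_trans[OF po] and A = po_antisym[OF po] and S = po_sub[OF po]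
  note B = basics
  have nx1: "\<And>u. (x',u) \<notin> snd P" "\<And>u. (u,x') \<notin> snd P" "\<And>u. (y',u) \<notin> snd P" "\<And>u. (u,y') \<notin> snd P"
    using S nx ny by blast+
  show "(a,c) \<in> unzR P x y x' y'"
    using ab bc unfolding Rmem
    apply (elim disjE conjE)
    apply (simp_all add: nx1 nxy nxy[symmetric])
    subgoal using T A B(6) by metis
    subgoal using T by blast
    subgoal using T A by metis
    subgoal using T A by metis
    subgoal using T by blast
    subgoal using T A B by metis
    subgoal using T A B by metis
    subgoal using T A B by metis
    subgoal using T A B by metis
    subgoal using T A B by metis
    done
qed

lemma C_sub_R: "unzC P x y x' y' \<subseteq> unzR P x y x' y'"
  unfolding unzC_def unzR_def cover_pairs_def covers_def
  using basics po_refl[OF po] by auto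

lemma Ctr_sub_R: "(unzC P x y x' y')\<^sup>+ \<subseteq> unzR P x y x' y'"
  using C_sub_R R_trans by (metis trancl_id trancl_mono subrelI)

lemma cp_le: "(a,b) \<in> cover_pairs P \<Longrightarrow> (a,b) \<in> snd P \<and> a \<noteq> b"
  unfolding cover_pairs_def covers_def by auto

lemma lift: "(a,c) \<in> (cover_pairs P)\<^sup>+ \<Longrightarrow> ((a,c) \<noteq> (y,x) \<longrightarrow> (a,c) \<in> (unzC P x y x' y')\<^sup>+) \<and> (c = y \<longrightarrow> (a,y') \<in> (unzC P x y x' y')\<^sup>+)"
proof (induction rule: trancl_induct)
  case (base c)
  then show ?case unfolding unzC_def by auto
next
  case (step b c)
  let ?C = "unzC P x y x' y'"
  have bc: "(b,c) \<in> snd P" "b \<noteq> c" using cp_le[OF step(2)] by auto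
  have ab: "(a,b) \<in> snd P" "a \<noteq> b" using cover_trancl_le[OF po step(1)] by auto
  show ?case
  proof (intro conjI impI)
    assume ne: "(a,c) \<noteq> (y,x)"
    show "(a,c) \<in> ?C\<^sup>+"
    proof (cases "(b,c) = (y,x)")
      case True
      then have "(a,y') \<in> ?C\<^sup>+" using step(3) by auto
      moreover have "(y',x) \<in> ?C" unfolding unzC_def by auto
      ultimately show ?thesis using True by (metis trancl.trancl_into_trancl prod.inject)
    next
      case False
      then have bcC: "(b,c) \<in> ?C" using step(2) unfolding unzC_def by auto
      show ?thesis
      proof (cases "(a,b) = (y,x)")
        case True
        have "(y,x') \<in> ?C" "(x',c) \<in> ?C" using step(2) True unfolding unzC_def by auto
        then show ?thesis using True by auto
      next
        case False
        then show ?thesis using step(3) bcC by auto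
      qed
    qed
  next
    assume cy: "c = y"
    then have "b \<noteq> x" using bc basics po_antisym[OF po] po_trans[OF po] by metis
    then have "(a,b) \<in> ?C\<^sup>+" using step(3) by auto
    moreover have "(b,y') \<in> ?C" using step(2) cy unfolding unzC_def by auto
    ultimately show "(a,y') \<in> ?C\<^sup>+" by auto
  qed
qed

lemma R_sub_C: "unzR P x y x' y' \<subseteq> (unzC P x y x' y')\<^sup>+"
proof (rule subrelI)
  fix a c assume "(a,c) \<in> unzR P x y x' y'"
  let ?C = "unzC P x y x' y'"
  note LT = le_cover_trancl[OF fin po]
  have yx': "(y,x') \<in> ?C" "(y',x') \<in> ?C" "(y',x) \<in> ?C" unfolding unzC_def by auto
  have ay: "(a,y') \<in> ?C\<^sup>+" if "(a,y) \<in> snd P" "a \<noteq> y" for a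
    using lift[OF LT[OF that]] by auto
  have xc: "(x,c) \<in> ?C\<^sup>+" if "(x,c) \<in> snd P" "c \<noteq> x" for c
    using lift[OF LT[OF that(1)]] that basics by auto
  have x'c: "(x',c) \<in> ?C\<^sup>+" if hc: "(x,c) \<in> snd P" "c \<noteq> x" for c
  proof -
    obtain d where d: "(x,d) \<in> cover_pairs P" "(d,c) \<in> (cover_pairs P)\<^sup>*"
      using tranclD[OF LT[OF hc(1)]] hc by blast
    have "(x',d) \<in> ?C" using d(1) unfolding unzC_def by auto
    moreover have "d = c \<or> (d,c) \<in> ?C\<^sup>+"
    proof (cases "d = c")
      case False
      then have "(d,c) \<in> (cover_pairs P)\<^sup>+" using d(2) by (meson rtranclD)
      moreover have "d \<noteq> y" using cp_le[OF d(1)] basics po_antisym[OF po] by metis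
      ultimately show ?thesis using lift by auto
    qed simp
    ultimately show ?thesis by auto
  qed
  show "(a,c) \<in> ?C\<^sup>+"
    using \<open>(a,c) \<in> unzR P x y x' y'\<close> unfolding Rmem
  proof (elim disjE conjE)
    assume "(a,c) \<in> snd P" "a \<noteq> c" "(a,c) \<noteq> (y,x)"
    then show ?thesis using lift[OF LT] by blast
  next
    assume "a = x'" "(x,c) \<in> snd P" "c \<noteq> x" then show ?thesis using x'c by simp
  next
    assume "c = x'" "(a,y) \<in> snd P"
    then show ?thesis using ay yx' by (cases "a = y") (auto intro: trancl_into_trancl)
  next
    assume "a = y'" "(x,c) \<in> snd P"
    then show ?thesis using xc yx' by (cases "c = x") (auto intro: trancl_into_trancl2)
  next
    assume "c = y'" "(a,y) \<in> snd P" "a \<noteq> y" then show ?thesis using ay by simp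
  next
    assume "a = y'" "c = x'" then show ?thesis using yx' by auto
  qed
qed

lemma snd_unzip: "snd (unzip P x y x' y') = Id_on (fst P \<union> {x',y'}) \<union> unzR P x y x' y'"
  unfolding unzip_eq using R_sub_C Ctr_sub_R by auto

lemma part1: "zip_poset (unzip P x y x' y') x' y' y = P"
proof -
  have f: "fst (unzip P x y x' y') - {x', y'} = fst P" using nx ny unfolding unzip_eq by auto
  have s: "{(a, c). a \<in> fst P \<and> c \<in> fst P \<and> ((a, c) \<in> snd (unzip P x y x' y') \<or>
        (a = y \<and> (y', c) \<in> snd (unzip P x y x' y') \<and> c \<noteq> y'))} = snd P"
  proof -
   have key: "\<And>a c. (a \<in> fst P \<and> c \<in> fst P \<and> ((a, c) \<in> snd (unzip P x y x' y') \<or>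
        (a = y \<and> (y', c) \<in> snd (unzip P x y x' y') \<and> c \<noteq> y'))) = ((a, c) \<in> snd P)"
   proof -
    fix a c
    note T = po_trans[OF po] and S = po_sub[OF po] and Rf = po_refl[OF po]
    show "(a \<in> fst P \<and> c \<in> fst P \<and> ((a, c) \<in> snd (unzip P x y x' y') \<or>
        (a = y \<and> (y', c) \<in> snd (unzip P x y x' y') \<and> c \<noteq> y'))) = ((a, c) \<in> snd P)"
    proof
      assume h: "a \<in> fst P \<and> c \<in> fst P \<and> ((a, c) \<in> snd (unzip P x y x' y') \<or>
        (a = y \<and> (y', c) \<in> snd (unzip P x y x' y') \<and> c \<noteq> y'))"
      then have ac: "a \<in> fst P" "c \<in> fst P" by auto
      then have n: "a \<noteq> x'" "a \<noteq> y'" "c \<noteq> x'" "c \<noteq> y'" using nx ny by auto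
      have sP: "(u,v) \<notin> snd P" if "u = x' \<or> u = y' \<or> v = x' \<or> v = y'" for u v
        using that S nx ny by blast
      have "(a,c) \<in> Id_on (fst P \<union> {x',y'}) \<union> unzR P x y x' y' \<or>
        (a = y \<and> (y', c) \<in> Id_on (fst P \<union> {x',y'}) \<union> unzR P x y x' y' \<and> c \<noteq> y')"
        using h unfolding snd_unzip by (simp only: snd_unzip)
      then show "(a,c) \<in> snd P"
      proof
        assume "(a,c) \<in> Id_on (fst P \<union> {x',y'}) \<union> unzR P x y x' y'"
        then show ?thesis unfolding Un_iff Rmem using n ac Rf by auto
      next
        assume "a = y \<and> (y', c) \<in> Id_on (fst P \<union> {x',y'}) \<union> unzR P x y x' y' \<and> c \<noteq> y'"
        then have "a = y" "(x,c) \<in> snd P" unfolding Un_iff Rmem using n nxy sP by auto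
        then show ?thesis using T basics(3) by blast
      qed
    next
      assume h: "(a,c) \<in> snd P"
      then have ac: "a \<in> fst P" "c \<in> fst P" using S by auto
      show "a \<in> fst P \<and> c \<in> fst P \<and> ((a, c) \<in> snd (unzip P x y x' y') \<or>
        (a = y \<and> (y', c) \<in> snd (unzip P x y x' y') \<and> c \<noteq> y'))"
      proof (cases "a = c")
        case True then show ?thesis unfolding snd_unzip using ac by auto
      next
        case False
        show ?thesis
        proof (cases "(a,c) = (y,x)")
          case True
          have "(y',x) \<in> unzR P x y x' y'" unfolding Rmem using Rf basics by auto
          then show ?thesis unfolding snd_unzip using True ac ny basics by auto
        next
          case F2: False
          have "(a,c) \<in> unzR P x y x' y'" unfolding Rmem using h False F2 by auto
          then show ?thesis unfolding snd_unzip using ac by auto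
        qed
      qed
    qed
   qed
   show ?thesis
     apply (rule set_eqI)
     subgoal for p by (cases p) (simp only: mem_Collect_eq case_prod_conv key)
     done
  qed
  show ?thesis unfolding zip_poset_def f s by simp
qed

definition "cu u v \<longleftrightarrow> (u,v) \<in> snd (unzip P x y x' y') \<or> (v,u) \<in> snd (unzip P x y x' y')"
definition "cp u v \<longleftrightarrow> (u,v) \<in> snd P \<or> (v,u) \<in> snd P"

lemma memU: "(u,v) \<in> snd (unzip P x y x' y') \<longleftrightarrow> (u = v \<and> u \<in> fst P \<union> {x',y'}) \<or> (u,v) \<in> unzR P x y x' y'"
  unfolding snd_unzip by auto

lemma c1: assumes "u \<in> fst P" "v \<in> fst P"
  shows "cu u v \<longleftrightarrow> cp u v \<and> \<not>(u=x\<and>v=y) \<and> \<not>(u=y\<and>v=x)"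
proof -
  have n: "u \<noteq> x'" "u \<noteq> y'" "v \<noteq> x'" "v \<noteq> y'" using assms nx ny by auto
  show ?thesis unfolding cu_def cp_def memU Rmem using n assms basics po_refl[OF po]
    by auto
qed

lemma c2: assumes "v \<in> fst P"
  shows "cu x' v \<longleftrightarrow> v \<noteq> x \<and> cp x v \<and> cp y v"
proof -
  note T = po_trans[OF po] and A = po_antisym[OF po] and S = po_sub[OF po]
  have n: "v \<noteq> x'" "v \<noteq> y'" using assms nx ny by auto
  have "cu x' v \<longleftrightarrow> (v,y) \<in> snd P \<or> ((x,v) \<in> snd P \<and> v \<noteq> x)"
    unfolding cu_def memU Rmem using n nxy S nx ny by auto
  also have "\<dots> \<longleftrightarrow> v \<noteq> x \<and> cp x v \<and> cp y v"
    unfolding cp_def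
  proof
    assume "(v,y) \<in> snd P \<or> ((x,v) \<in> snd P \<and> v \<noteq> x)"
    then show "v \<noteq> x \<and> ((x, v) \<in> snd P \<or> (v, x) \<in> snd P) \<and> ((y, v) \<in> snd P \<or> (v, y) \<in> snd P)"
      using T A basics by metis
  next
    assume h: "v \<noteq> x \<and> ((x, v) \<in> snd P \<or> (v, x) \<in> snd P) \<and> ((y, v) \<in> snd P \<or> (v, y) \<in> snd P)"
    show "(v,y) \<in> snd P \<or> ((x,v) \<in> snd P \<and> v \<noteq> x)"
    proof (cases "(v,y) \<in> snd P")
      case False
      then have "(y,v) \<in> snd P" using h by blast
      then show ?thesis using h basics(6) False by blast
    qed simp
  qed
  finally show ?thesis .
qed

lemma c3: assumes "v \<in> fst P"
  shows "cu y' v \<longleftrightarrow> v \<noteq> y \<and> cp x v \<and> cp y v"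
proof -
  note T = po_trans[OF po] and A = po_antisym[OF po] and S = po_sub[OF po]
  have n: "v \<noteq> x'" "v \<noteq> y'" using assms nx ny by auto
  have "cu y' v \<longleftrightarrow> ((v,y) \<in> snd P \<and> v \<noteq> y) \<or> (x,v) \<in> snd P"
    unfolding cu_def memU Rmem using n nxy S nx ny by auto
  also have "\<dots> \<longleftrightarrow> v \<noteq> y \<and> cp x v \<and> cp y v"
    unfolding cp_def
  proof
    assume "((v,y) \<in> snd P \<and> v \<noteq> y) \<or> (x,v) \<in> snd P"
    then show "v \<noteq> y \<and> ((x, v) \<in> snd P \<or> (v, x) \<in> snd P) \<and> ((y, v) \<in> snd P \<or> (v, y) \<in> snd P)"
      using T A basics by metis
  next
    assume h: "v \<noteq> y \<and> ((x, v) \<in> snd P \<or> (v, x) \<in> snd P) \<and> ((y, v) \<in> snd P \<or> (v, y) \<in> snd P)"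
    show "((v,y) \<in> snd P \<and> v \<noteq> y) \<or> (x,v) \<in> snd P"
    proof (cases "(v,y) \<in> snd P")
      case False
      then have "(y,v) \<in> snd P" using h by blast
      then show ?thesis using h basics(6) False po_refl[OF po] basics(1) by metis
    qed (use h in simp)
  qed
  finally show ?thesis .
qed

lemma c4: "cu x' y'" "cu y' x'" "cu x' x'" "cu y' y'"
  unfolding cu_def memU Rmem by auto

lemma cu_sym: "cu u v = cu v u" unfolding cu_def by blast

lemma OP: "order_complex P bt tp = {F. F \<subseteq> fst P - {bt,tp} \<and> (\<forall>u\<in>F. \<forall>v\<in>F. cp u v)}"
  unfolding order_complex_def cp_def by simp

lemma OU: "order_complex (unzip P x y x' y') bt tp = {F. F \<subseteq> fst P \<union> {x',y'} - {bt,tp} \<and> (\<forall>u\<in>F. \<forall>v\<in>F. cu u v)}"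
  unfolding order_complex_def cu_def by (simp add: unzip_eq)

lemma Lchar: "G \<in> link (order_complex P bt tp) {x,y} \<longleftrightarrow> G \<subseteq> fst P - {bt,tp,x,y} \<and> (\<forall>u\<in>G. \<forall>v\<in>G. cp u v) \<and> (\<forall>v\<in>G. cp x v \<and> cp y v)"
  if "x \<notin> {bt,tp}" "y \<notin> {bt,tp}"
  unfolding link_def OP cp_def using that basics po_refl[OF po] by auto

lemma Lprime: "link (edge_subdiv (order_complex P bt tp) x y x') {x,x'} = link (order_complex P bt tp) {x,y}"
  if "x \<notin> {bt,tp}" "y \<notin> {bt,tp}"
proof -
  have Lsub: "G \<subseteq> fst P - {x,y}" if "G \<in> link (order_complex P bt tp) {x,y}" for G
    using Lchar that \<open>x \<notin> {bt,tp}\<close> \<open>y \<notin> {bt,tp}\<close> by blast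
  have Osub: "F \<subseteq> fst P" if "F \<in> order_complex P bt tp" for F using that unfolding OP by blast
  show ?thesis
    unfolding edge_subdiv_def
    apply (rule set_eqI)
    apply (simp only: link_def[of _ "{x,x'}"] mem_Collect_eq)
    apply (rule iffI)
    subgoal for G
    proof (elim conjE UnE)
      assume d: "G \<inter> {x,x'} = {}"
      { assume "G \<union> {x,x'} \<in> {F \<in> order_complex P bt tp. \<not> {x, y} \<subseteq> F}"
        then show ?thesis using Osub nx by blast }
      { assume "G \<union> {x,x'} \<in> {F \<union> {x'} |F. F \<in> link (order_complex P bt tp) {x, y}}"
        then obtain F where "G \<union> {x,x'} = F \<union> {x'}" "F \<in> link (order_complex P bt tp) {x, y}" by blast
        then show ?thesis using Lsub nx basics by blast }
      { assume "G \<union> {x,x'} \<in> {F \<union> {x, x'} |F. F \<in> link (order_complex P bt tp) {x, y}}"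
        then obtain F where F: "G \<union> {x,x'} = F \<union> {x,x'}" "F \<in> link (order_complex P bt tp) {x, y}" by blast
        have "F \<inter> {x,x'} = {}" using Lsub[OF F(2)] nx by blast
        then have "G = F" using d F(1) by blast
        then show ?thesis using F by simp }
      { assume "G \<union> {x,x'} \<in> {F \<union> {y, x'} |F. F \<in> link (order_complex P bt tp) {x, y}}"
        then obtain F where "G \<union> {x,x'} = F \<union> {y,x'}" "F \<in> link (order_complex P bt tp) {x, y}" by blast
        then show ?thesis using Lsub nx basics by blast }
    qed
    subgoal for G
    proof
      assume G: "G \<in> link (order_complex P bt tp) {x, y}"
      show "G \<inter> {x,x'} = {}" using Lsub[OF G] nx by blast
      show "G \<union> {x,x'} \<in> {F \<in> order_complex P bt tp. \<not> {x, y} \<subseteq> F} \<union>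
        {F \<union> {x'} |F. F \<in> link (order_complex P bt tp) {x, y}} \<union>
        {F \<union> {x, x'} |F. F \<in> link (order_complex P bt tp) {x, y}} \<union>
        {F \<union> {y, x'} |F. F \<in> link (order_complex P bt tp) {x, y}}" using G by blast
    qed
    done
qed

lemma chain_insert: "(\<forall>u\<in>insert a F. \<forall>v\<in>insert a F. cu u v) \<longleftrightarrow> cu a a \<and> (\<forall>v\<in>F. cu a v) \<and> (\<forall>u\<in>F. \<forall>v\<in>F. cu u v)"
  by (simp add: ball_simps) (use cu_sym in blast)

lemma part3:
  assumes xb: "x \<notin> {bt,tp}" and yb: "y \<notin> {bt,tp}" and bP: "bt \<in> fst P" "tp \<in> fst P"
  shows "order_complex (unzip P x y x' y') bt tp
          = edge_subdiv (edge_subdiv (order_complex P bt tp) x y x') x x' y'"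
proof -
  let ?O = "order_complex P bt tp"
  let ?L = "link ?O {x,y}"
  have Lsub: "G \<subseteq> fst P - {bt,tp,x,y}" if "G \<in> ?L" for G
    using that unfolding Lchar[OF xb yb] by (elim conjE)
  have Osub: "F \<subseteq> fst P" if "F \<in> ?O" for F using that unfolding OP by auto
  have btn: "bt \<noteq> x'" "bt \<noteq> y'" "tp \<noteq> x'" "tp \<noteq> y'"
    using nx ny bP by auto
  have R: "F \<in> edge_subdiv (edge_subdiv ?O x y x') x x' y' \<longleftrightarrow>
     (F \<in> ?O \<and> \<not> {x,y} \<subseteq> F) \<or> (\<exists>G\<in>?L. F = G \<union> {x'} \<or> F = G \<union> {y,x'} \<or> F = G \<union> {y'}
        \<or> F = G \<union> {x,y'} \<or> F = G \<union> {x',y'})" for F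
  proof -
    have D1: "F \<in> edge_subdiv ?O x y x' \<longleftrightarrow> (F\<in>?O \<and> \<not>{x,y}\<subseteq>F) \<or> (\<exists>G\<in>?L. F = G\<union>{x'} \<or> F = G\<union>{x,x'} \<or> F = G\<union>{y,x'})" for F
      unfolding edge_subdiv_def by blast
    have D2: "F \<in> edge_subdiv (edge_subdiv ?O x y x') x x' y' \<longleftrightarrow> (F \<in> edge_subdiv ?O x y x' \<and> \<not>{x,x'}\<subseteq>F)
       \<or> (\<exists>G\<in>?L. F = G\<union>{y'} \<or> F = G\<union>{x,y'} \<or> F = G\<union>{x',y'})"
      unfolding edge_subdiv_def[of "edge_subdiv ?O x y x'"] Lprime[OF xb yb] by blast
    have D1': "(F \<in> edge_subdiv ?O x y x' \<and> \<not>{x,x'}\<subseteq>F) \<longleftrightarrow> (F\<in>?O \<and> \<not>{x,y}\<subseteq>F) \<or> (\<exists>G\<in>?L. F = G\<union>{x'} \<or> F = G\<union>{y,x'})"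
    proof
      assume h: "F \<in> edge_subdiv ?O x y x' \<and> \<not>{x,x'}\<subseteq>F"
      then show "(F\<in>?O \<and> \<not>{x,y}\<subseteq>F) \<or> (\<exists>G\<in>?L. F = G\<union>{x'} \<or> F = G\<union>{y,x'})"
        unfolding D1 by blast
    next
      assume h: "(F\<in>?O \<and> \<not>{x,y}\<subseteq>F) \<or> (\<exists>G\<in>?L. F = G\<union>{x'} \<or> F = G\<union>{y,x'})"
      then show "F \<in> edge_subdiv ?O x y x' \<and> \<not>{x,x'}\<subseteq>F"
      proof
        assume "F\<in>?O \<and> \<not>{x,y}\<subseteq>F"
        then show ?thesis unfolding D1 using Osub nx by blast
      next
        assume "\<exists>G\<in>?L. F = G\<union>{x'} \<or> F = G\<union>{y,x'}"
        then obtain G where G: "G \<in> ?L" "F = G\<union>{x'} \<or> F = G\<union>{y,x'}" by blast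
        have "x \<notin> F" using G Lsub[OF G(1)] basics nx by blast
        then show ?thesis unfolding D1 using G by blast
      qed
    qed
    show ?thesis unfolding D2 D1' by blast
  qed
  show ?thesis
  proof (rule set_eqI)
    fix F
    show "F \<in> order_complex (unzip P x y x' y') bt tp \<longleftrightarrow> F \<in> edge_subdiv (edge_subdiv ?O x y x') x x' y'"
      unfolding R
    proof
      assume "F \<in> order_complex (unzip P x y x' y') bt tp"
      then have Fs: "F \<subseteq> fst P \<union> {x',y'} - {bt,tp}" and ch: "\<And>u v. u \<in> F \<Longrightarrow> v \<in> F \<Longrightarrow> cu u v"
        unfolding OU by auto
      have cpF: "cp u v" if "u \<in> F" "v \<in> F" "u \<in> fst P" "v \<in> fst P" for u v
        using ch[OF that(1,2)] c1[OF that(3,4)] by blast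
      have nxy: "\<not> cu x y" using c1[OF basics(1,2)] by simp
      have nx'x: "\<not> cu x' x" using c2[OF basics(1)] by simp
      have ny'y: "\<not> cu y' y" using c3[OF basics(2)] by simp
      show "(F \<in> ?O \<and> \<not> {x,y} \<subseteq> F) \<or> (\<exists>G\<in>?L. F = G \<union> {x'} \<or> F = G \<union> {y,x'} \<or> F = G \<union> {y'}
        \<or> F = G \<union> {x,y'} \<or> F = G \<union> {x',y'})"
      proof (cases "x' \<in> F")
        case True
        then have xF: "x \<notin> F" using ch nx'x by blast
        have c2F: "cp x v \<and> cp y v" if "v \<in> F" "v \<in> fst P" for v
          using ch[OF True that(1)] c2[OF that(2)] by blast
        show ?thesis
        proof (cases "y' \<in> F")
          case True
          then have yF: "y \<notin> F" using ch ny'y by blast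
          let ?G = "F - {x',y'}"
          have "?G \<in> ?L" unfolding Lchar[OF xb yb] using Fs xF yF cpF c2F by blast
          moreover have "F = ?G \<union> {x',y'}" using True \<open>x' \<in> F\<close> by blast
          ultimately show ?thesis by blast
        next
          case False
          let ?G = "F - {x',y}"
          have "?G \<in> ?L" unfolding Lchar[OF xb yb] using Fs xF False cpF c2F by blast
          moreover have "F = ?G \<union> {x'} \<or> F = ?G \<union> {y,x'}" using \<open>x' \<in> F\<close> by blast
          ultimately show ?thesis by blast
        qed
      next
        case False
        show ?thesis
        proof (cases "y' \<in> F")
          case True
          then have yF: "y \<notin> F" using ch ny'y by blast
          have c3F: "cp x v \<and> cp y v" if "v \<in> F" "v \<in> fst P" for v
            using ch[OF True that(1)] c3[OF that(2)] by blast
          let ?G = "F - {y',x}"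
          have "?G \<in> ?L" unfolding Lchar[OF xb yb] using Fs yF False cpF c3F by blast
          moreover have "F = ?G \<union> {y'} \<or> F = ?G \<union> {x,y'}" using True by blast
          ultimately show ?thesis by blast
        next
          case F2: False
          have "F \<subseteq> fst P - {bt,tp}" using Fs False F2 by blast
          then have "F \<in> ?O" unfolding OP using cpF by blast
          moreover have "\<not> {x,y} \<subseteq> F" using ch nxy by blast
          ultimately show ?thesis by blast
        qed
      qed
    next
      assume "(F \<in> ?O \<and> \<not> {x,y} \<subseteq> F) \<or> (\<exists>G\<in>?L. F = G \<union> {x'} \<or> F = G \<union> {y,x'} \<or> F = G \<union> {y'}
        \<or> F = G \<union> {x,y'} \<or> F = G \<union> {x',y'})"
      then show "F \<in> order_complex (unzip P x y x' y') bt tp"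
      proof
        assume h: "F \<in> ?O \<and> \<not> {x,y} \<subseteq> F"
        then have Fs: "F \<subseteq> fst P - {bt,tp}" and ch: "\<And>u v. u \<in> F \<Longrightarrow> v \<in> F \<Longrightarrow> cp u v"
          unfolding OP by auto
        have "cu u v" if "u \<in> F" "v \<in> F" for u v
          using c1[of u v] ch[OF that] Fs that h by blast
        then show ?thesis unfolding OU using Fs by blast
      next
        assume "\<exists>G\<in>?L. F = G \<union> {x'} \<or> F = G \<union> {y,x'} \<or> F = G \<union> {y'}
          \<or> F = G \<union> {x,y'} \<or> F = G \<union> {x',y'}"
        then obtain G where G: "G \<in> ?L" and Fc: "F = G \<union> {x'} \<or> F = G \<union> {y,x'} \<or> F = G \<union> {y'}
          \<or> F = G \<union> {x,y'} \<or> F = G \<union> {x',y'}" by blast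
        have Gs: "G \<subseteq> fst P - {bt,tp,x,y}" and Gch: "\<And>u v. u \<in> G \<Longrightarrow> v \<in> G \<Longrightarrow> cp u v"
          and Gxy: "\<And>v. v \<in> G \<Longrightarrow> cp x v \<and> cp y v"
          using G unfolding Lchar[OF xb yb] by blast+
        have gg: "\<forall>u\<in>G. \<forall>v\<in>G. cu u v" using Gs Gch c1 by blast
        have gx': "\<forall>v\<in>G. cu x' v" using Gs Gxy c2 by blast
        have gy': "\<forall>v\<in>G. cu y' v" using Gs Gxy c3 by blast
        have gx: "\<forall>v\<in>G. cu x v" using Gs Gxy c1 basics(1) by blast
        have gy: "\<forall>v\<in>G. cu y v" using Gs Gxy c1 basics(2) by blast
        have cpr: "cp x x" "cp y y" "cp x y" unfolding cp_def using po_refl[OF po] basics by auto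
        have pr: "cu x' y" "cu y y" "cu y' x" "cu x x"
          using c2[OF basics(2)] c1[OF basics(2) basics(2)] c3[OF basics(1)] c1[OF basics(1) basics(1)] cpr basics(4)
          by (auto simp: cp_def)
        have sub: "F \<subseteq> fst P \<union> {x',y'} - {bt,tp}" using Fc Gs btn xb yb basics(1,2) by blast
        have "\<forall>u\<in>F. \<forall>v\<in>F. cu u v"
          using Fc
          apply (elim disjE)
          apply (simp_all only: Un_insert_right Un_empty_right chain_insert)
          using gg gx' gy' gx gy pr c4 cu_sym by blast+
        then show ?thesis unfolding OU using sub by blast
      qed
    qed
  qed
qed

end
locale zp =
  fixes P :: "'a poset" and x y z :: 'a
  assumes po: "is_poset P" and fin: "finite (fst P)" and zh: "zip_hyp P x y z"
    and xP: "x \<in> fst P" and yP: "y \<in> fst P" and zP: "z \<in> fst P"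
begin

lemma zfacts: "y \<noteq> z" "covers P x y" "covers P x z" "\<And>w. w \<in> fst P \<Longrightarrow> covers P y w \<longleftrightarrow> covers P z w"
   "\<And>w. w \<in> fst P \<Longrightarrow> covers P x w \<Longrightarrow> w = y \<or> w = z"
  using zh yP zP unfolding zip_hyp_def by (auto simp: set_eq_iff)

lemma zb: "(y,x) \<in> snd P" "(z,x) \<in> snd P" "x \<noteq> y" "x \<noteq> z"
  using zfacts(2,3) unfolding covers_def by auto

lemma Z1: assumes "(w,x) \<in> snd P" "w \<noteq> x" shows "(w,y) \<in> snd P \<or> (w,z) \<in> snd P"
proof -
  obtain c where c: "(w,c) \<in> (cover_pairs P)\<^sup>*" "(c,x) \<in> cover_pairs P"
    using tranclD2[OF le_cover_trancl[OF fin po assms]] by blast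
  have cP: "c \<in> fst P" "covers P x c" using c(2) unfolding cover_pairs_def by auto
  have wc: "(w,c) \<in> snd P"
    using c(1) proof (cases rule: rtranclE)
    case base then show ?thesis using cP po_refl[OF po] by simp
  next
    case (step d) then show ?thesis using cover_trancl_le[OF po] rtrancl_into_trancl1 by metis
  qed
  show ?thesis using zfacts(5)[OF cP] wc by blast
qed

lemma Z2: assumes "(w,y) \<in> snd P" "w \<noteq> y" shows "(w,z) \<in> snd P"
proof -
  obtain c where c: "(w,c) \<in> (cover_pairs P)\<^sup>*" "(c,y) \<in> cover_pairs P"
    using tranclD2[OF le_cover_trancl[OF fin po assms]] by blast
  have cP: "c \<in> fst P" "covers P y c" using c(2) unfolding cover_pairs_def by auto
  then have "covers P z c" using zfacts(4) by blast
  then have cz: "(c,z) \<in> snd P" unfolding covers_def by blast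
  have wc: "(w,c) \<in> snd P"
    using c(1) proof (cases rule: rtranclE)
    case base then show ?thesis using cP po_refl[OF po] by simp
  next
    case (step d) then show ?thesis using cover_trancl_le[OF po] rtrancl_into_trancl1 by metis
  qed
  show ?thesis using po_trans[OF po, OF wc cz] .
qed

lemma Z2': assumes "(w,z) \<in> snd P" "w \<noteq> z" shows "(w,y) \<in> snd P"
proof -
  obtain c where c: "(w,c) \<in> (cover_pairs P)\<^sup>*" "(c,z) \<in> cover_pairs P"
    using tranclD2[OF le_cover_trancl[OF fin po assms]] by blast
  have cP: "c \<in> fst P" "covers P z c" using c(2) unfolding cover_pairs_def by auto
  then have "covers P y c" using zfacts(4) by blast
  then have cz: "(c,y) \<in> snd P" unfolding covers_def by blast
  have wc: "(w,c) \<in> snd P"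
    using c(1) proof (cases rule: rtranclE)
    case base then show ?thesis using cP po_refl[OF po] by simp
  next
    case (step d) then show ?thesis using cover_trancl_le[OF po] rtrancl_into_trancl1 by metis
  qed
  show ?thesis using po_trans[OF po, OF wc cz] .
qed

lemma E2char: "F \<in> edge_contract (edge_contract D y x) x z \<longleftrightarrow>
   (F \<in> D \<and> x \<notin> F \<and> y \<notin> F) \<or> (\<exists>H\<in>D. (x \<in> H \<or> y \<in> H) \<and> F = H - {x,y} \<union> {z})"
proof
  assume "F \<in> edge_contract (edge_contract D y x) x z"
  then show "(F \<in> D \<and> x \<notin> F \<and> y \<notin> F) \<or> (\<exists>H\<in>D. (x \<in> H \<or> y \<in> H) \<and> F = H - {x,y} \<union> {z})"
  proof -
    assume h: "F \<in> edge_contract (edge_contract D y x) x z"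
    have E1: "K \<in> edge_contract D y x \<longleftrightarrow> (K \<in> D \<and> y \<notin> K) \<or> (\<exists>H. K = H - {y} \<union> {x} \<and> y \<in> H \<and> H \<in> D)" for K
      unfolding edge_contract_def by blast
    have "(F \<in> edge_contract D y x \<and> x \<notin> F) \<or> (\<exists>K. F = K - {x} \<union> {z} \<and> x \<in> K \<and> K \<in> edge_contract D y x)"
      using h unfolding edge_contract_def[of "edge_contract D y x"] by blast
    then show ?thesis
    proof
      assume "F \<in> edge_contract D y x \<and> x \<notin> F"
      then show ?thesis unfolding E1 by blast
    next
      assume "\<exists>K. F = K - {x} \<union> {z} \<and> x \<in> K \<and> K \<in> edge_contract D y x"
      then obtain K where K: "F = K - {x} \<union> {z}" "x \<in> K" "K \<in> edge_contract D y x" by blast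
      from K(3)[unfolded E1] show ?thesis
      proof
        assume "K \<in> D \<and> y \<notin> K"
        then have "F = K - {x,y} \<union> {z}" using K by blast
        then show ?thesis using K \<open>K \<in> D \<and> y \<notin> K\<close> by blast
      next
        assume "\<exists>H. K = H - {y} \<union> {x} \<and> y \<in> H \<and> H \<in> D"
        then obtain H where H: "K = H - {y} \<union> {x}" "y \<in> H" "H \<in> D" by blast
        have "F = H - {x,y} \<union> {z}" using K(1) H(1) by blast
        then show ?thesis using H by blast
      qed
    qed
  qed
next
  assume "(F \<in> D \<and> x \<notin> F \<and> y \<notin> F) \<or> (\<exists>H\<in>D. (x \<in> H \<or> y \<in> H) \<and> F = H - {x,y} \<union> {z})"
  then show "F \<in> edge_contract (edge_contract D y x) x z"
  proof
    assume "F \<in> D \<and> x \<notin> F \<and> y \<notin> F" then show ?thesis unfolding edge_contract_def by blast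
  next
    assume "\<exists>H\<in>D. (x \<in> H \<or> y \<in> H) \<and> F = H - {x,y} \<union> {z}"
    then obtain H where H: "H \<in> D" "x \<in> H \<or> y \<in> H" "F = H - {x,y} \<union> {z}" by blast
    show ?thesis
    proof (cases "y \<in> H")
      case True
      let ?K = "H - {y} \<union> {x}"
      have "?K \<in> edge_contract D y x" unfolding edge_contract_def using H True by blast
      moreover have "F = ?K - {x} \<union> {z}" using H by blast
      ultimately show ?thesis unfolding edge_contract_def[of _ x z] by blast
    next
      case False
      have "H \<in> edge_contract D y x" unfolding edge_contract_def using H False by blast
      moreover have "F = H - {x} \<union> {z}" using H False by blast
      ultimately show ?thesis unfolding edge_contract_def[of _ x z] using H False by blast
    qed
  qed
qed

lemma part2:
  assumes xb: "x \<notin> {bt,tp}" and yb: "y \<notin> {bt,tp}" and zb': "z \<notin> {bt,tp}"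
  shows "order_complex (zip_poset P x y z) bt tp = edge_contract (edge_contract (order_complex P bt tp) y x) x z"
proof (rule set_eqI)
  fix F
  let ?O = "order_complex P bt tp"
  define rz where "rz u v \<longleftrightarrow> (u,v) \<in> snd P \<or> (u = z \<and> (y,v) \<in> snd P \<and> v \<noteq> y)" for u v
  note T = po_trans[OF po] and A = po_antisym[OF po] and S = po_sub[OF po] and Rf = po_refl[OF po]
  have OZ: "F \<in> order_complex (zip_poset P x y z) bt tp \<longleftrightarrow>
     F \<subseteq> fst P - {x,y} - {bt,tp} \<and> (\<forall>u\<in>F. \<forall>v\<in>F. rz u v \<or> rz v u)"
    unfolding order_complex_def zip_poset_def rz_def by auto
  have OPc: "H \<in> ?O \<longleftrightarrow> H \<subseteq> fst P - {bt,tp} \<and> (\<forall>u\<in>H. \<forall>v\<in>H. (u,v) \<in> snd P \<or> (v,u) \<in> snd P)" for H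
    unfolding order_complex_def by auto
  have xz: "z \<noteq> x" "z \<noteq> y" using zb zfacts(1) by auto
  show "F \<in> order_complex (zip_poset P x y z) bt tp \<longleftrightarrow> F \<in> edge_contract (edge_contract ?O y x) x z"
    unfolding E2char OZ
  proof
    assume "F \<subseteq> fst P - {x,y} - {bt,tp} \<and> (\<forall>u\<in>F. \<forall>v\<in>F. rz u v \<or> rz v u)"
    then have Fs: "F \<subseteq> fst P - {x,y} - {bt,tp}" and ch: "\<And>u v. u \<in> F \<Longrightarrow> v \<in> F \<Longrightarrow> rz u v \<or> rz v u" by auto
    have chP: "(u,v) \<in> snd P \<or> (v,u) \<in> snd P" if "u \<in> F" "v \<in> F" "u \<noteq> z" "v \<noteq> z" for u v
      using ch[OF that(1,2)] that(3,4) unfolding rz_def by blast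
    show "(F \<in> ?O \<and> x \<notin> F \<and> y \<notin> F) \<or> (\<exists>H\<in>?O. (x \<in> H \<or> y \<in> H) \<and> F = H - {x,y} \<union> {z})"
    proof (cases "z \<in> F \<and> (\<exists>b\<in>F. (z,b) \<notin> snd P \<and> (b,z) \<notin> snd P)")
      case False
      have "F \<in> ?O" unfolding OPc
      proof (intro conjI ballI)
        show "F \<subseteq> fst P - {bt,tp}" using Fs by blast
        fix u v assume uv: "u \<in> F" "v \<in> F"
        show "(u,v) \<in> snd P \<or> (v,u) \<in> snd P"
        proof (cases "u = z \<or> v = z")
          case True then show ?thesis using False uv by blast
        qed (use chP uv in blast)
      qed
      then show ?thesis using Fs by blast
    next
      case True
      then obtain b where zF: "z \<in> F" and b: "b \<in> F" "(z,b) \<notin> snd P" "(b,z) \<notin> snd P" by blast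
      have bz: "b \<noteq> z" using b Rf zP by blast
      have yb2: "(y,b) \<in> snd P" using ch[OF zF b(1)] b bz unfolding rz_def by blast
      let ?H = "F - {z} \<union> {y}"
      have yw: "(w,y) \<in> snd P \<or> (y,w) \<in> snd P" if "w \<in> F" "w \<noteq> z" for w
      proof -
        have "rz z w \<or> rz w z" using ch[OF zF that(1)] .
        then have "(z,w) \<in> snd P \<or> (w,z) \<in> snd P \<or> (y,w) \<in> snd P" unfolding rz_def using that(2) by blast
        then show ?thesis
        proof (elim disjE)
          assume "(w,z) \<in> snd P" then show ?thesis using Z2' that(2) by blast
        next
          assume zw: "(z,w) \<in> snd P"
          have "b \<noteq> w" using zw b by blast
          then have "(b,w) \<in> snd P \<or> (w,b) \<in> snd P" using chP[OF b(1) that(1) bz that(2)] by blast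
          then show ?thesis
          proof
            assume "(w,b) \<in> snd P" then have "(z,b) \<in> snd P" using T zw by blast
            then show ?thesis using b by blast
          next
            assume "(b,w) \<in> snd P" then show ?thesis using T yb2 by blast
          qed
        qed simp
      qed
      have "?H \<in> ?O" unfolding OPc
      proof (intro conjI ballI)
        show "?H \<subseteq> fst P - {bt,tp}" using Fs yP yb by blast
        fix u v assume uv: "u \<in> ?H" "v \<in> ?H"
        show "(u,v) \<in> snd P \<or> (v,u) \<in> snd P"
        proof (cases "u = y")
          case True
          then show ?thesis
          proof (cases "v = y")
            case True then show ?thesis using \<open>u = y\<close> Rf yP by blast
          next
            case False then show ?thesis using yw[of v] uv \<open>u = y\<close> by blast
          qed
        next
          case False
          then show ?thesis
          proof (cases "v = y")
            case True then show ?thesis using yw[of u] uv False by blast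
          next
            case F2: False then show ?thesis using chP[of u v] uv False F2 by blast
          qed
        qed
      qed
      moreover have "F = ?H - {x,y} \<union> {z}" using Fs zF xz by blast
      ultimately have "\<exists>H\<in>?O. (x \<in> H \<or> y \<in> H) \<and> F = H - {x,y} \<union> {z}"
        by (intro bexI[of _ ?H]) simp_all
      then show ?thesis by (rule disjI2)
    qed
  next
    assume "(F \<in> ?O \<and> x \<notin> F \<and> y \<notin> F) \<or> (\<exists>H\<in>?O. (x \<in> H \<or> y \<in> H) \<and> F = H - {x,y} \<union> {z})"
    then show "F \<subseteq> fst P - {x,y} - {bt,tp} \<and> (\<forall>u\<in>F. \<forall>v\<in>F. rz u v \<or> rz v u)"
    proof
      assume "F \<in> ?O \<and> x \<notin> F \<and> y \<notin> F"
      then show ?thesis unfolding OPc rz_def by blast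
    next
      assume "\<exists>H\<in>?O. (x \<in> H \<or> y \<in> H) \<and> F = H - {x,y} \<union> {z}"
      then obtain H where H: "H \<in> ?O" "x \<in> H \<or> y \<in> H" and Fe: "F = H - {x,y} \<union> {z}" by blast
      have Hs: "H \<subseteq> fst P - {bt,tp}" and Hc: "\<And>u v. u \<in> H \<Longrightarrow> v \<in> H \<Longrightarrow> (u,v) \<in> snd P \<or> (v,u) \<in> snd P"
        using H(1) unfolding OPc by auto
      have zw: "rz z w \<or> rz w z" if w: "w \<in> H" "w \<noteq> x" "w \<noteq> y" for w
      proof (cases "w = z")
        case True then show ?thesis unfolding rz_def using Rf zP by blast
      next
        case wz: False
        show ?thesis
        proof (cases "x \<in> H")
          case True
          have "(w,x) \<in> snd P \<or> (x,w) \<in> snd P" using Hc[OF w(1) True] .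
          then show ?thesis
          proof
            assume "(w,x) \<in> snd P"
            then have "(w,y) \<in> snd P \<or> (w,z) \<in> snd P" using Z1 w(2) by blast
            then show ?thesis using Z2 w(3) unfolding rz_def by blast
          next
            assume "(x,w) \<in> snd P" then show ?thesis using T zb(2) unfolding rz_def by blast
          qed
        next
          case False
          then have yH: "y \<in> H" using H(2) by blast
          have "(w,y) \<in> snd P \<or> (y,w) \<in> snd P" using Hc[OF w(1) yH] .
          then show ?thesis using Z2 w(3) unfolding rz_def by blast
        qed
      qed
      have "F \<subseteq> fst P - {x,y} - {bt,tp}" using Fe Hs zP zb' xz by blast
      moreover have "\<forall>u\<in>F. \<forall>v\<in>F. rz u v \<or> rz v u"
      proof (intro ballI)
        fix u v assume uv: "u \<in> F" "v \<in> F"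
        show "rz u v \<or> rz v u"
        proof (cases "u = z")
          case True then show ?thesis
          proof (cases "v = z")
            case True then show ?thesis using \<open>u = z\<close> Rf zP unfolding rz_def by blast
          next
            case False then show ?thesis using zw[of v] uv Fe \<open>u = z\<close> by blast
          qed
        next
          case False then show ?thesis
          proof (cases "v = z")
            case True then show ?thesis using zw[of u] uv Fe False by blast
          next
            case F2: False then show ?thesis using Hc[of u v] uv Fe False unfolding rz_def by blast
          qed
        qed
      qed
      ultimately show ?thesis by blast
    qed
  qed
qed

end

theorem proposition2p4:
  fixes P :: "'a poset" and bt tp :: 'a
  assumes "graded_bounded_poset P bt tp"
  shows
   "(\<forall>x y x' y'. x \<in> fst P - {bt, tp} \<longrightarrow> y \<in> fst P - {bt, tp} \<longrightarrow> covers P x y \<longrightarrow>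
        x' \<notin> fst P \<longrightarrow> y' \<notin> fst P \<longrightarrow> x' \<noteq> y' \<longrightarrow>
        zip_poset (unzip P x y x' y') x' y' y = P)
    \<and> (\<forall>x y z. x \<in> fst P - {bt, tp} \<longrightarrow> y \<in> fst P - {bt, tp} \<longrightarrow> z \<in> fst P - {bt, tp} \<longrightarrow>
        zip_hyp P x y z \<longrightarrow>
        order_complex (zip_poset P x y z) bt tp
          = edge_contract (edge_contract (order_complex P bt tp) y x) x z)
    \<and> (\<forall>x y x' y'. x \<in> fst P - {bt, tp} \<longrightarrow> y \<in> fst P - {bt, tp} \<longrightarrow> covers P x y \<longrightarrow>
        x' \<notin> fst P \<longrightarrow> y' \<notin> fst P \<longrightarrow> x' \<noteq> y' \<longrightarrow>
        order_complex (unzip P x y x' y') bt tp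
          = edge_subdiv (edge_subdiv (order_complex P bt tp) x y x') x x' y')"
  proof -
  have fin: "finite (fst P)" and po: "is_poset P" and bP: "bt \<in> fst P" "tp \<in> fst P"
    using assms unfolding graded_bounded_poset_def by auto
  show ?thesis
  proof (intro conjI allI impI)
    fix x y x' y'
    assume "x \<in> fst P - {bt, tp}" "y \<in> fst P - {bt, tp}" "covers P x y" "x' \<notin> fst P" "y' \<notin> fst P" "x' \<noteq> y'"
    then have "unz P x y x' y'" using po fin by (intro unz.intro) auto
    then show "zip_poset (unzip P x y x' y') x' y' y = P"
      by (rule unz.part1)
  next
    fix x y z
    assume h: "x \<in> fst P - {bt, tp}" "y \<in> fst P - {bt, tp}" "z \<in> fst P - {bt, tp}" "zip_hyp P x y z"
    have "zp P x y z" using h po fin by (intro zp.intro) auto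
    then show "order_complex (zip_poset P x y z) bt tp
          = edge_contract (edge_contract (order_complex P bt tp) y x) x z"
      using zp.part2[OF \<open>zp P x y z\<close>, of bt tp] h by simp
  next
    fix x y x' y'
    assume h: "x \<in> fst P - {bt, tp}" "y \<in> fst P - {bt, tp}" "covers P x y" "x' \<notin> fst P" "y' \<notin> fst P" "x' \<noteq> y'"
    have "unz P x y x' y'" using h po fin by (intro unz.intro) auto
    then show "order_complex (unzip P x y x' y') bt tp
          = edge_subdiv (edge_subdiv (order_complex P bt tp) x y x') x x' y'"
      using unz.part3[OF \<open>unz P x y x' y'\<close>, of bt tp] h bP by simp
  qed
qed

end
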